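(* Let $\mathcal{C}$ be the class of distributions supported on $[0,1]$ that can be written as a mixture $wF_1+(1-w)F_2$ of two regular distributions $F_1,F_2$ ($w\in[0,1]$). Any algorithm in the pricing query model that, for every $F\in\mathcal{C}$, outputs an estimate of the CDF of $F$ within Lévy distance $\epsilon$ (with constant success probability) requires $\Omega(\epsilon^{-3})$ pricing queries.
   Context: A distribution with CDF $F$ is regular if $R(q)=qF^{-1}(1-q)$ is concave on $[0,1]$. Pricing query model: in each round $t$ the algorithm (adaptively) chooses a price $p_t$, a fresh sample $v_t\sim F$ is drawn independently, and the algorithm observes only $\mathrm{sign}(v_t-p_t)\in\{-1,+1\}$. Lévy distance: $\mathrm{L\acute{e}vy}(F,G)=\inf\{\epsilon: F(v-\epsilon)-\epsilon\le G(v)\le F(v+\epsilon)+\epsilon\ \forall v\}$. *)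

theory Defs
  imports "HOL-Probability.Probability"
begin

definition quantile :: "(real \<Rightarrow> real) \<Rightarrow> real \<Rightarrow> real" where
  "quantile F p = Inf {v. p \<le> F v}"

definition revenue_curve :: "(real \<Rightarrow> real) \<Rightarrow> real \<Rightarrow> real" where
  "revenue_curve F q = q * quantile F (1 - q)"

definition regular :: "real measure \<Rightarrow> bool" where
  "regular D \<longleftrightarrow> real_distribution D \<and> concave_on {0<..<1} (revenue_curve (cdf D))"

definition mix2_regular_class :: "real measure \<Rightarrow> bool" where
  "mix2_regular_class D \<longleftrightarrow> real_distribution D \<and> measure D {0..1} = 1 \<and>
     (\<exists>w D1 D2. 0 \<le> w \<and> w \<le> 1 \<and> regular D1 \<and> regular D2 \<and>
        (\<forall>x. cdf D x = w * cdf D1 x + (1 - w) * cdf D2 x))"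

text \<open>Levy distance (extended-real valued; infimum of the empty set is infinity).\<close>
definition levy_dist :: "(real \<Rightarrow> real) \<Rightarrow> (real \<Rightarrow> real) \<Rightarrow> ereal" where
  "levy_dist F G = Inf {ereal e | e. \<forall>v. F (v - e) - e \<le> G v \<and> G v \<le> F (v + e) + e}"

text \<open>Probability of observing answer b at price p: True means v >= p (sign +1).\<close>
definition resp_prob :: "real measure \<Rightarrow> real \<Rightarrow> bool \<Rightarrow> real" where
  "resp_prob D p b = (if b then measure D {p..} else measure D {..<p})"

text \<open>Success probability of a deterministic adaptive algorithm with n pricing queries:
  price h is the next price given the history h of answers, est h the output CDF estimate.\<close>
definition det_success :: "real measure \<Rightarrow> nat \<Rightarrow> real \<Rightarrow> (bool list \<Rightarrow> real)
    \<Rightarrow> (bool list \<Rightarrow> real \<Rightarrow> real) \<Rightarrow> real" where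
  "det_success D n \<epsilon> price est =
     (\<Sum>h\<in>{h. length h = n}. (\<Prod>t<n. resp_prob D (price (take t h)) (h ! t)) *
        (if levy_dist (cdf D) (est h) \<le> ereal \<epsilon> then 1 else 0))"

text \<open>Randomized algorithm: internal random seed \<omega> drawn from probability space M.\<close>
definition success_prob :: "real measure \<Rightarrow> real measure \<Rightarrow> nat \<Rightarrow> real
    \<Rightarrow> (real \<Rightarrow> bool list \<Rightarrow> real) \<Rightarrow> (real \<Rightarrow> bool list \<Rightarrow> real \<Rightarrow> real) \<Rightarrow> real" where
  "success_prob M D n \<epsilon> price est = (\<integral>\<omega>. det_success D n \<epsilon> (price \<omega>) (est \<omega>) \<partial>M)"

end

theory Submission
  imports Defs
begin


definition Ptree :: "(real \<Rightarrow> bool \<Rightarrow> real) \<Rightarrow> (bool list \<Rightarrow> real) \<Rightarrow> nat \<Rightarrow> bool list \<Rightarrow> real" where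
  "Ptree r price n h = (\<Prod>t<n. r (price (take t h)) (h ! t))"

abbreviation HL :: "nat \<Rightarrow> bool list set" where "HL n \<equiv> {h. length h = n}"

lemma finite_HL: "finite (HL n)"
proof -
  have "HL n = {xs. set xs \<subseteq> UNIV \<and> length xs = n}" by auto
  then show ?thesis using finite_lists_length_eq[of "UNIV::bool set" n] by simp
qed

lemma HL_Suc_sum: "sum f (HL (Suc n)) = sum (\<lambda>h. f (True # h)) (HL n) + sum (\<lambda>h. f (False # h)) (HL n)"
proof -
  have eq: "HL (Suc n) = (\<lambda>h. True # h) ` HL n \<union> (\<lambda>h. False # h) ` HL n"
    by (auto simp: length_Suc_conv)
  have "sum f (HL (Suc n)) = sum f ((\<lambda>h. True # h) ` HL n) + sum f ((\<lambda>h. False # h) ` HL n)"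
    unfolding eq by (rule sum.union_disjoint) (auto intro: finite_HL)
  also have "\<dots> = sum (\<lambda>h. f (True # h)) (HL n) + sum (\<lambda>h. f (False # h)) (HL n)"
    by (subst sum.reindex, simp add: inj_on_def, subst sum.reindex, simp_all add: inj_on_def)
  finally show ?thesis .
qed

lemma Ptree_Cons: "Ptree r price (Suc n) (b # h) = r (price []) b * Ptree r (\<lambda>g. price (b # g)) n h"
  unfolding Ptree_def prod.lessThan_Suc_shift by simp

lemma Ptree_0[simp]: "Ptree r price 0 h = 1" by (simp add: Ptree_def)

lemma Ptree_sum1:
  assumes "\<And>p. r p True + r p False = 1"
  shows "sum (Ptree r price n) (HL n) = 1"
  using assms
proof (induction n arbitrary: price)
  case 0 then show ?case by simp
next
  case (Suc n)
  show ?case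
    unfolding HL_Suc_sum Ptree_Cons sum_distrib_left[symmetric] Suc.IH[OF Suc.prems]
    using Suc.prems by simp
qed

lemma Ptree_nonneg:
  assumes "\<And>p b. r p b \<ge> 0" shows "Ptree r price n h \<ge> 0"
  unfolding Ptree_def by (rule prod_nonneg) (use assms in auto)

definition klstep :: "(real \<Rightarrow> bool \<Rightarrow> real) \<Rightarrow> (real \<Rightarrow> bool \<Rightarrow> real) \<Rightarrow> real \<Rightarrow> real" where
  "klstep r0 r1 p = r0 p True * ln (r0 p True / r1 p True) + r0 p False * ln (r0 p False / r1 p False)"

definition KLt :: "(real \<Rightarrow> bool \<Rightarrow> real) \<Rightarrow> (real \<Rightarrow> bool \<Rightarrow> real) \<Rightarrow> (bool list \<Rightarrow> real) \<Rightarrow> nat \<Rightarrow> real" where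
  "KLt r0 r1 price n = (\<Sum>h\<in>HL n. Ptree r0 price n h * ln (Ptree r0 price n h / Ptree r1 price n h))"

definition Cnt :: "(real \<Rightarrow> real) \<Rightarrow> (bool list \<Rightarrow> real) \<Rightarrow> nat \<Rightarrow> bool list \<Rightarrow> real" where
  "Cnt c price n h = (\<Sum>t<n. c (price (take t h)))"

lemma Cnt_Cons: "Cnt c price (Suc n) (b # h) = c (price []) + Cnt c (\<lambda>g. price (b # g)) n h"
  unfolding Cnt_def sum.lessThan_Suc_shift by simp

lemma ln_split:
  fixes x y x' y' :: real
  assumes "x \<ge> 0" "y \<ge> 0" "x > 0 \<Longrightarrow> x' > 0" "y > 0 \<Longrightarrow> y' > 0"
  shows "x * y * ln (x * y / (x' * y')) = x * y * ln (x / x') + x * (y * ln (y / y'))"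
proof (cases "x = 0 \<or> y = 0")
  case True then show ?thesis by auto
next
  case False
  then have "x > 0" "y > 0" "x' > 0" "y' > 0" using assms by auto
  then have "ln (x * y / (x' * y')) = ln (x / x') + ln (y / y')"
    by (simp add: ln_div ln_mult)
  then show ?thesis by (simp add: algebra_simps)
qed

lemma Ptree_pos_transfer:
  assumes "\<And>p b. r0 p b \<ge> 0" "\<And>p b. r0 p b > 0 \<Longrightarrow> r1 p b > 0"
    and "Ptree r0 price n h > 0"
  shows "Ptree r1 price n h > 0"
proof -
  have "\<forall>t<n. r0 (price (take t h)) (h ! t) \<noteq> 0"
    using assms(3) unfolding Ptree_def
    by (metis (no_types, lifting) finite_lessThan lessThan_iff less_irrefl prod_zero_iff)
  then have "\<forall>t<n. r1 (price (take t h)) (h ! t) > 0"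
    using assms(1,2) by (metis order_le_less)
  then show ?thesis unfolding Ptree_def by (intro prod_pos) auto
qed

lemma KLt_bound:
  assumes nn: "\<And>p b. r0 p b \<ge> 0" and s1: "\<And>p. r0 p True + r0 p False = 1"
    and ac: "\<And>p b. r0 p b > 0 \<Longrightarrow> r1 p b > 0"
    and kc: "\<And>p. klstep r0 r1 p \<le> c p"
  shows "KLt r0 r1 price n \<le> (\<Sum>h\<in>HL n. Ptree r0 price n h * Cnt c price n h)"
proof (induction n arbitrary: price)
  case 0 then show ?case by (simp add: KLt_def Cnt_def)
next
  case (Suc n)
  define p where "p = price []"
  define pT where "pT = (\<lambda>g. price (True # g))"
  define pF where "pF = (\<lambda>g. price (False # g))"
  have sT: "sum (Ptree r0 pT n) (HL n) = 1" and sF: "sum (Ptree r0 pF n) (HL n) = 1"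
    using Ptree_sum1[of r0, OF s1] by auto
  have tm: "Ptree r0 price (Suc n) (b # h) * ln (Ptree r0 price (Suc n) (b # h) / Ptree r1 price (Suc n) (b # h))
     = r0 p b * Ptree r0 (\<lambda>g. price (b # g)) n h * ln (r0 p b / r1 p b)
       + r0 p b * (Ptree r0 (\<lambda>g. price (b # g)) n h * ln (Ptree r0 (\<lambda>g. price (b # g)) n h / Ptree r1 (\<lambda>g. price (b # g)) n h))" for b h
    unfolding Ptree_Cons p_def
    by (rule ln_split) (auto intro: nn Ptree_nonneg ac Ptree_pos_transfer[OF nn ac])
  have "KLt r0 r1 price (Suc n) = klstep r0 r1 p + r0 p True * KLt r0 r1 pT n + r0 p False * KLt r0 r1 pF n"
    unfolding KLt_def HL_Suc_sum tm sum.distrib sum_distrib_left[symmetric] sum_distrib_right[symmetric]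
    unfolding pT_def[symmetric] pF_def[symmetric] sT sF klstep_def by (simp add: algebra_simps)
  also have "\<dots> \<le> c p + r0 p True * (\<Sum>h\<in>HL n. Ptree r0 pT n h * Cnt c pT n h)
      + r0 p False * (\<Sum>h\<in>HL n. Ptree r0 pF n h * Cnt c pF n h)"
    using kc[of p] Suc.IH[of pT] Suc.IH[of pF] nn[of p True] nn[of p False]
    by (meson add_mono mult_left_mono)
  also have "\<dots> = (\<Sum>h\<in>HL (Suc n). Ptree r0 price (Suc n) h * Cnt c price (Suc n) h)"
    unfolding HL_Suc_sum Ptree_Cons Cnt_Cons p_def[symmetric] pT_def[symmetric] pF_def[symmetric]
    by (simp add: algebra_simps sum.distrib sum_distrib_left[symmetric] sum_distrib_right[symmetric] sT sF)
       (metis s1[of p] distrib_left mult.right_neutral add.commute)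
  finally show ?case .
qed


lemma hel_term:
  fixes x y :: real
  assumes "x \<ge> 0" "y \<ge> 0" "x > 0 \<Longrightarrow> y > 0"
  shows "x * ln (x / y) \<ge> (sqrt x - sqrt y)^2 + x - y"
proof (cases "x = 0")
  case True then show ?thesis using assms by (simp add: power2_eq_square)
next
  case False
  then have x: "x > 0" and y: "y > 0" using assms by auto
  have "ln (sqrt y / sqrt x) \<le> sqrt y / sqrt x - 1" using x y by (intro ln_le_minus_one) auto
  moreover have "ln (x / y) = - 2 * ln (sqrt y / sqrt x)"
    using x y by (simp add: ln_div ln_sqrt)
  ultimately have "x * ln (x / y) \<ge> x * (-2) * (sqrt y / sqrt x - 1)"
    using x by (simp add: mult_left_mono)
  also have "x * (-2) * (sqrt y / sqrt x - 1) = 2 * x - 2 * sqrt x * sqrt y"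
    using x by (simp add: field_simps)
  also have "\<dots> = (sqrt x - sqrt y)^2 + x - y"
    using x y by (simp add: power2_eq_square algebra_simps)
  finally show ?thesis .
qed

lemma TV_bound:
  assumes nn0: "\<And>p b. r0 p b \<ge> 0" and s0: "\<And>p. r0 p True + r0 p False = 1"
    and nn1: "\<And>p b. r1 p b \<ge> 0" and s1: "\<And>p. r1 p True + r1 p False = 1"
    and ac: "\<And>p b. r0 p b > 0 \<Longrightarrow> r1 p b > 0"
  shows "(\<Sum>h\<in>HL n. \<bar>Ptree r0 price n h - Ptree r1 price n h\<bar>) \<le> 2 * sqrt (KLt r0 r1 price n)"
proof -
  let ?P = "Ptree r0 price n" and ?Q = "Ptree r1 price n"
  have P0: "?P h \<ge> 0" and Q0: "?Q h \<ge> 0" for h using Ptree_nonneg nn0 nn1 by auto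
  have sP: "sum ?P (HL n) = 1" using Ptree_sum1[of r0, OF s0] .
  have sQ: "sum ?Q (HL n) = 1" using Ptree_sum1[of r1, OF s1] .
  have "(\<Sum>h\<in>HL n. (sqrt (?P h) - sqrt (?Q h))^2 + ?P h - ?Q h) \<le> KLt r0 r1 price n"
    unfolding KLt_def
    by (rule sum_mono, rule hel_term[OF P0 Q0], rule Ptree_pos_transfer[OF nn0 ac])
  then have H: "(\<Sum>h\<in>HL n. (sqrt (?P h) - sqrt (?Q h))^2) \<le> KLt r0 r1 price n"
    by (simp add: sum.distrib sum_subtractf sP sQ)
  have ab: "\<bar>?P h - ?Q h\<bar> = \<bar>sqrt (?P h) - sqrt (?Q h)\<bar> * (sqrt (?P h) + sqrt (?Q h))" for h
  proof -
    have "?P h - ?Q h = (sqrt (?P h) - sqrt (?Q h)) * (sqrt (?P h) + sqrt (?Q h))"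
      using P0[of h] Q0[of h] by (simp add: algebra_simps)
    moreover have "sqrt (?P h) + sqrt (?Q h) \<ge> 0" using P0[of h] Q0[of h] by simp
    ultimately show ?thesis by (metis abs_mult abs_of_nonneg)
  qed
  have b2: "(sqrt (?P h) + sqrt (?Q h))^2 \<le> 2 * (?P h + ?Q h)" for h
  proof -
    have "0 \<le> (sqrt (?P h) - sqrt (?Q h))^2" by simp
    then show ?thesis using P0[of h] Q0[of h] by (simp add: power2_eq_square algebra_simps)
  qed
  have K0: "0 \<le> KLt r0 r1 price n" using H by (smt (verit) sum_nonneg zero_le_power2)
  have "(\<Sum>h\<in>HL n. \<bar>?P h - ?Q h\<bar>)^2 \<le> (\<Sum>h\<in>HL n. (\<bar>sqrt (?P h) - sqrt (?Q h)\<bar>)^2) * (\<Sum>h\<in>HL n. (sqrt (?P h) + sqrt (?Q h))^2)"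
    unfolding ab by (rule Cauchy_Schwarz_ineq_sum)
  also have "\<dots> \<le> KLt r0 r1 price n * 4"
  proof (rule mult_mono)
    show "(\<Sum>h\<in>HL n. (\<bar>sqrt (?P h) - sqrt (?Q h)\<bar>)^2) \<le> KLt r0 r1 price n" using H by simp
    have "(\<Sum>h\<in>HL n. (sqrt (?P h) + sqrt (?Q h))^2) \<le> (\<Sum>h\<in>HL n. 2 * (?P h + ?Q h))"
      by (rule sum_mono) (rule b2)
    also have "\<dots> = 4" by (simp add: sum_distrib_left[symmetric] sum.distrib sP sQ)
    finally show "(\<Sum>h\<in>HL n. (sqrt (?P h) + sqrt (?Q h))^2) \<le> 4" .
    show "0 \<le> KLt r0 r1 price n" by (rule K0)
  qed (simp add: sum_nonneg)
  finally have "(\<Sum>h\<in>HL n. \<bar>?P h - ?Q h\<bar>)^2 \<le> (2 * sqrt (KLt r0 r1 price n))^2"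
    using K0 by (simp add: power_mult_distrib)
  then show ?thesis
    by (rule power2_le_imp_le) (use K0 in simp)
qed

lemma klstep_bound:
  assumes nn0: "\<And>b. r0 p b \<ge> 0" and s0: "r0 p True + r0 p False = 1"
    and pos1: "\<And>b. r1 p b > 0" and s1: "r1 p True + r1 p False = 1"
  shows "klstep r0 r1 p \<le> (r0 p True - r1 p True)^2 / r1 p True + (r0 p False - r1 p False)^2 / r1 p False"
proof -
  have t: "r0 p b * ln (r0 p b / r1 p b) \<le> (r0 p b - r1 p b)^2 / r1 p b + (r0 p b - r1 p b)" for b
  proof (cases "r0 p b = 0")
    case True then show ?thesis using pos1[of b] by (simp add: power2_eq_square)
  next
    case False
    then have x: "r0 p b > 0" using nn0[of b] by simp
    have "ln (r0 p b / r1 p b) \<le> r0 p b / r1 p b - 1" using x pos1[of b] by (intro ln_le_minus_one) auto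
    then have "r0 p b * ln (r0 p b / r1 p b) \<le> r0 p b * (r0 p b / r1 p b - 1)"
      using x by (simp add: mult_left_mono)
    also have "\<dots> = (r0 p b - r1 p b)^2 / r1 p b + (r0 p b - r1 p b)"
      using pos1[of b] by (simp add: field_simps power2_eq_square)
    finally show ?thesis .
  qed
  show ?thesis unfolding klstep_def using t[of True] t[of False] s0 s1 by linarith
qed


lemma pair_bound:
  assumes nn0: "\<And>p b. r0 p b \<ge> 0" and s0: "\<And>p. r0 p True + r0 p False = 1"
    and nn1: "\<And>p b. r1 p b \<ge> 0" and s1: "\<And>p. r1 p True + r1 p False = 1"
    and ac: "\<And>p b. r0 p b > 0 \<Longrightarrow> r1 p b > 0"
    and dis: "\<And>h. \<not> (S0 h \<and> S1 h)"
  shows "(\<Sum>h\<in>HL n. Ptree r0 price n h * (if S0 h then 1 else 0))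
       + (\<Sum>h\<in>HL n. Ptree r1 price n h * (if S1 h then 1 else 0))
      \<le> 1 + 2 * sqrt (KLt r0 r1 price n)"
proof -
  let ?P = "Ptree r0 price n" and ?Q = "Ptree r1 price n"
  have P0: "?P h \<ge> 0" and Q0: "?Q h \<ge> 0" for h using Ptree_nonneg nn0 nn1 by auto
  have "?P h * (if S0 h then 1 else 0) + ?Q h * (if S1 h then 1 else 0) \<le> ?P h + \<bar>?P h - ?Q h\<bar>" for h
    using dis[of h] P0[of h] Q0[of h] by auto
  then have "(\<Sum>h\<in>HL n. ?P h * (if S0 h then 1 else 0)) + (\<Sum>h\<in>HL n. ?Q h * (if S1 h then 1 else 0))
      \<le> (\<Sum>h\<in>HL n. ?P h) + (\<Sum>h\<in>HL n. \<bar>?P h - ?Q h\<bar>)"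
    unfolding sum.distrib[symmetric] by (rule sum_mono)
  also have "\<dots> \<le> 1 + 2 * sqrt (KLt r0 r1 price n)"
    using TV_bound[of r0 r1, OF nn0 s0 nn1 s1 ac, where n=n and price=price] Ptree_sum1[of r0, OF s0, of price n] by simp
  finally show ?thesis .
qed

lemma multi_bound:
  fixes k :: nat and C :: real
  assumes nn0: "\<And>p b. r0 p b \<ge> 0" and s0: "\<And>p. r0 p True + r0 p False = 1"
    and nn1: "\<And>j p b. j < k \<Longrightarrow> r j p b \<ge> 0" and s1: "\<And>j p. j < k \<Longrightarrow> r j p True + r j p False = 1"
    and ac: "\<And>j p b. j < k \<Longrightarrow> r0 p b > 0 \<Longrightarrow> r j p b > 0"
    and dis: "\<And>j h. j < k \<Longrightarrow> \<not> (S0 h \<and> S j h)"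
    and kc: "\<And>j p. j < k \<Longrightarrow> klstep r0 (r j) p \<le> c j p"
    and csum: "\<And>p. (\<Sum>j<k. c j p) \<le> C"
  shows "real k * (\<Sum>h\<in>HL n. Ptree r0 price n h * (if S0 h then 1 else 0))
       + (\<Sum>j<k. \<Sum>h\<in>HL n. Ptree (r j) price n h * (if S j h then 1 else 0))
      \<le> real k + 2 * sqrt (real k * (real n * C))"
proof -
  let ?P = "Ptree r0 price n"
  define N where "N j = (\<Sum>h\<in>HL n. ?P h * Cnt (c j) price n h)" for j
  have P0: "?P h \<ge> 0" for h using Ptree_nonneg nn0 by auto
  have KN: "KLt r0 (r j) price n \<le> N j" if "j < k" for j
    unfolding N_def by (rule KLt_bound[of r0 "r j" "c j"]) (use that nn0 s0 ac kc in auto)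
  have each: "(\<Sum>h\<in>HL n. ?P h * (if S0 h then 1 else 0))
       + (\<Sum>h\<in>HL n. Ptree (r j) price n h * (if S j h then 1 else 0)) \<le> 1 + 2 * sqrt (N j)"
    if "j < k" for j
  proof -
    have "(\<Sum>h\<in>HL n. ?P h * (if S0 h then 1 else 0))
       + (\<Sum>h\<in>HL n. Ptree (r j) price n h * (if S j h then 1 else 0)) \<le> 1 + 2 * sqrt (KLt r0 (r j) price n)"
      by (rule pair_bound[of r0 "r j"]) (use that nn0 s0 nn1 s1 ac dis in auto)
    also have "\<dots> \<le> 1 + 2 * sqrt (N j)" using KN[OF that] by simp
    finally show ?thesis .
  qed
  have "(\<Sum>j<k. (\<Sum>h\<in>HL n. ?P h * (if S0 h then 1 else 0))
       + (\<Sum>h\<in>HL n. Ptree (r j) price n h * (if S j h then 1 else 0))) \<le> (\<Sum>j<k. 1 + 2 * sqrt (N j))"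
    by (rule sum_mono) (rule each, simp)
  then have A: "real k * (\<Sum>h\<in>HL n. ?P h * (if S0 h then 1 else 0))
       + (\<Sum>j<k. \<Sum>h\<in>HL n. Ptree (r j) price n h * (if S j h then 1 else 0))
      \<le> real k + 2 * (\<Sum>j<k. sqrt (N j))"
    by (simp add: sum.distrib sum_distrib_left)
  have Nnn: "N j \<ge> 0" if "j < k" for j
  proof -
    have "0 \<le> (\<Sum>h\<in>HL n. \<bar>Ptree r0 price n h - Ptree (r j) price n h\<bar>)" by (rule sum_nonneg) simp
    also have "\<dots> \<le> 2 * sqrt (KLt r0 (r j) price n)"
      by (rule TV_bound[of r0 "r j", OF nn0 s0 nn1[OF that] s1[OF that] ac[OF that]])
    finally have "0 \<le> KLt r0 (r j) price n" by simp
    then show ?thesis using KN[OF that] by linarith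
  qed
  have "(\<Sum>j<k. N j) = (\<Sum>j<k. \<Sum>h\<in>HL n. \<Sum>t<n. ?P h * c j (price (take t h)))"
    by (simp add: N_def Cnt_def sum_distrib_left)
  also have "\<dots> = (\<Sum>h\<in>HL n. \<Sum>j<k. \<Sum>t<n. ?P h * c j (price (take t h)))"
    by (rule sum.swap)
  also have "\<dots> = (\<Sum>h\<in>HL n. \<Sum>t<n. \<Sum>j<k. ?P h * c j (price (take t h)))"
    by (rule sum.cong[OF refl], rule sum.swap)
  also have "\<dots> = (\<Sum>h\<in>HL n. ?P h * (\<Sum>t<n. \<Sum>j<k. c j (price (take t h))))"
    by (simp add: sum_distrib_left)
  also have "\<dots> \<le> (\<Sum>h\<in>HL n. ?P h * (real n * C))"
  proof (rule sum_mono, rule mult_left_mono)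
    fix h
    have "(\<Sum>t<n. \<Sum>j<k. c j (price (take t h))) \<le> (\<Sum>t<n. C)" by (rule sum_mono) (rule csum)
    then show "(\<Sum>t<n. \<Sum>j<k. c j (price (take t h))) \<le> real n * C" by simp
  qed (rule P0)
  also have "\<dots> = real n * C" using Ptree_sum1[of r0, OF s0, of price n] by (simp add: sum_distrib_right[symmetric])
  finally have NS: "(\<Sum>j<k. N j) \<le> real n * C" .
  have "(\<Sum>j<k. sqrt (N j) * 1)^2 \<le> (\<Sum>j<k. (sqrt (N j))^2) * (\<Sum>j<k. 1^2)"
    by (rule Cauchy_Schwarz_ineq_sum)
  also have "\<dots> = (\<Sum>j<k. N j) * real k" using Nnn by simp
  also have "\<dots> \<le> real k * (real n * C)" using NS by (simp add: mult.commute mult_left_mono)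
  finally have "(\<Sum>j<k. sqrt (N j))^2 \<le> real k * (real n * C)" by simp
  then have "(\<Sum>j<k. sqrt (N j)) \<le> sqrt (real k * (real n * C))"
    by (simp add: real_le_rsqrt)
  with A show ?thesis by simp
qed



lemma concave_quad:
  fixes c al :: real
  assumes "c \<ge> 0" "convex S"
  shows "concave_on S (\<lambda>q. al * q - c * q^2)"
  unfolding concave_on_iff
proof (intro conjI assms ballI allI impI)
  fix x y u v :: real assume uv: "0 \<le> u" "0 \<le> v" "u + v = 1"
  then have v: "v = 1 - u" by simp
  have "al * (u *\<^sub>R x + v *\<^sub>R y) - c * (u *\<^sub>R x + v *\<^sub>R y)^2 - (u * (al * x - c * x^2) + v * (al * y - c * y^2))
      = c * u * v * (x - y)^2"
    unfolding v by (simp add: power2_eq_square algebra_simps)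
  moreover have "c * u * v * (x - y)^2 \<ge> 0" using assms uv by simp
  ultimately show "u * (al * x - c * x^2) + v * (al * y - c * y^2) \<le> al * (u *\<^sub>R x + v *\<^sub>R y) - c * (u *\<^sub>R x + v *\<^sub>R y)^2"
    by linarith
qed

lemma concave_min:
  fixes f g :: "real \<Rightarrow> real"
  assumes "concave_on S f" "concave_on S g"
  shows "concave_on S (\<lambda>x. min (f x) (g x))"
  unfolding concave_on_iff
proof (intro conjI ballI allI impI)
  show "convex S" using assms(1) by (rule concave_on_imp_convex)
  fix x y u v :: real assume xy: "x \<in> S" "y \<in> S" and uv: "0 \<le> u" "0 \<le> v" "u + v = 1"
  have f: "u * f x + v * f y \<le> f (u *\<^sub>R x + v *\<^sub>R y)" using assms(1) xy uv unfolding concave_on_iff by blast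
  have g: "u * g x + v * g y \<le> g (u *\<^sub>R x + v *\<^sub>R y)" using assms(2) xy uv unfolding concave_on_iff by blast
  have "u * min (f x) (g x) \<le> u * f x" "u * min (f x) (g x) \<le> u * g x"
       "v * min (f y) (g y) \<le> v * f y" "v * min (f y) (g y) \<le> v * g y"
    using uv by (auto intro: mult_left_mono)
  then show "u * min (f x) (g x) + v * min (f y) (g y) \<le> min (f (u *\<^sub>R x + v *\<^sub>R y)) (g (u *\<^sub>R x + v *\<^sub>R y))"
    using f g by linarith
qed

lemma concave_cong:
  fixes f g :: "real \<Rightarrow> real"
  assumes "concave_on S g" "\<And>x. x \<in> S \<Longrightarrow> f x = g x"
  shows "concave_on S f"
  unfolding concave_on_iff
proof (intro conjI ballI allI impI)
  show cS: "convex S" using assms(1) by (rule concave_on_imp_convex)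
  fix x y u v :: real assume xy: "x \<in> S" "y \<in> S" and uv: "0 \<le> u" "0 \<le> v" "u + v = 1"
  have "u *\<^sub>R x + v *\<^sub>R y \<in> S" using cS xy uv by (rule convexD)
  then show "u * f x + v * f y \<le> f (u *\<^sub>R x + v *\<^sub>R y)"
    using assms(1) xy uv assms(2) unfolding concave_on_iff by simp
qed


definition FB :: "real \<Rightarrow> real \<Rightarrow> real" where
  "FB a x = (if x < a then 0 else if x < 1 then (x - a) / (1 - a) else 1)"

definition FA :: "real \<Rightarrow> real \<Rightarrow> real \<Rightarrow> real" where
  "FA a m x = (if x < 0 then 0 else if x < m then x / a else 1)"

lemma rc_if:
  fixes g h :: "real \<Rightarrow> real"
  assumes "continuous (at_right x) g" "continuous (at_right x) h"
  shows "continuous (at_right x) (\<lambda>y. if y < m then g y else h y)"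
proof (cases "x < m")
  case True
  have ev: "eventually (\<lambda>y. g y = (if y < m then g y else h y)) (at_right x)"
    using True unfolding eventually_at_right_field by (intro exI[of _ m]) auto
  have "((\<lambda>y. if y < m then g y else h y) \<longlongrightarrow> g x) (at_right x)"
    using assms(1) ev unfolding continuous_within by (rule Lim_transform_eventually)
  then show ?thesis using True unfolding continuous_within by simp
next
  case False
  have ev: "eventually (\<lambda>y. h y = (if y < m then g y else h y)) (at_right x)"
    using False unfolding eventually_at_right_field by (intro exI[of _ "x+1"]) auto
  have "((\<lambda>y. if y < m then g y else h y) \<longlongrightarrow> h x) (at_right x)"
    using assms(2) ev unfolding continuous_within by (rule Lim_transform_eventually)
  then show ?thesis using False unfolding continuous_within by simp
qed

lemma rc_cont: "continuous (at x) f \<Longrightarrow> continuous (at_right x) f"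
  by (rule continuous_at_imp_continuous_at_within)

lemma FB_mono: "0 \<le> a \<Longrightarrow> a < 1 \<Longrightarrow> x \<le> y \<Longrightarrow> FB a x \<le> FB a y"
  unfolding FB_def by (auto simp: divide_simps)

lemma FB_rc: assumes "a < 1" shows "continuous (at_right x) (FB a)"
proof -
  have "FB a = (\<lambda>y. if y < a then 0 else (if y < 1 then (y - a) / (1 - a) else 1))"
    by (simp add: FB_def fun_eq_iff)
  then show ?thesis
    by (simp only:) (intro rc_if rc_cont continuous_intros, use assms in auto)
qed

lemma FB_bot: "(FB a \<longlongrightarrow> 0) at_bot"
proof -
  have "eventually (\<lambda>x. FB a x = 0) at_bot"
    unfolding eventually_at_bot_linorder by (rule exI[of _ "a - 1"]) (simp add: FB_def)
  then show ?thesis by (rule tendsto_eventually)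
qed

lemma FB_top: "(FB a \<longlongrightarrow> 1) at_top"
proof -
  have "eventually (\<lambda>x. FB a x = 1) at_top"
    unfolding eventually_at_top_linorder by (rule exI[of _ "max a 1"]) (simp add: FB_def)
  then show ?thesis by (rule tendsto_eventually)
qed

lemma FA_mono: "0 < m \<Longrightarrow> m < a \<Longrightarrow> x \<le> y \<Longrightarrow> FA a m x \<le> FA a m y"
  unfolding FA_def by (auto simp: divide_simps)

lemma FA_rc: assumes "0 < a" shows "continuous (at_right x) (FA a m)"
proof -
  have "FA a m = (\<lambda>y. if y < 0 then 0 else (if y < m then y / a else 1))"
    by (simp add: FA_def fun_eq_iff)
  then show ?thesis
    by (simp only:) (intro rc_if rc_cont continuous_intros, use assms in auto)
qed

lemma FA_bot: "(FA a m \<longlongrightarrow> 0) at_bot"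
proof -
  have "eventually (\<lambda>x. FA a m x = 0) at_bot"
    unfolding eventually_at_bot_linorder by (rule exI[of _ "- 1"]) (simp add: FA_def)
  then show ?thesis by (rule tendsto_eventually)
qed

lemma FA_top: "(FA a m \<longlongrightarrow> 1) at_top"
proof -
  have "eventually (\<lambda>x. FA a m x = 1) at_top"
    unfolding eventually_at_top_linorder by (rule exI[of _ "max m 0"]) (simp add: FA_def)
  then show ?thesis by (rule tendsto_eventually)
qed

lemma quantile_FB:
  assumes "0 \<le> a" "a < 1" "0 < u" "u < 1"
  shows "quantile (FB a) u = a + (1 - a) * u"
proof -
  have "{v. u \<le> FB a v} = {a + (1 - a) * u..}"
  proof (intro set_eqI iffI)
    fix v assume "v \<in> {v. u \<le> FB a v}"
    then have v: "u \<le> FB a v" by simp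
    show "v \<in> {a + (1 - a) * u..}"
    proof (cases "v < a")
      case True then show ?thesis using v assms by (simp add: FB_def)
    next
      case False
      show ?thesis
      proof (cases "v < 1")
        case True
        then have "u \<le> (v - a) / (1 - a)" using v False by (simp add: FB_def)
        then show ?thesis using assms by (simp add: field_simps)
      next
        case False
        have "(1 - a) * u \<le> (1 - a) * 1" using assms by (intro mult_left_mono) auto
        then show ?thesis using False by simp
      qed
    qed
  next
    fix v assume "v \<in> {a + (1 - a) * u..}"
    then have v: "a + (1 - a) * u \<le> v" by simp
    have "0 \<le> (1 - a) * u" using assms by simp
    then have va: "a \<le> v" using v by linarith
    show "v \<in> {v. u \<le> FB a v}"
    proof (cases "v < 1")
      case True
      have "u \<le> (v - a) / (1 - a)" using v assms by (simp add: field_simps)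
      then show ?thesis using True va by (simp add: FB_def)
    next
      case False then show ?thesis using va assms by (simp add: FB_def)
    qed
  qed
  then show ?thesis unfolding quantile_def by simp
qed

lemma quantile_FA:
  assumes "0 < m" "m < a" "0 < u" "u < 1"
  shows "quantile (FA a m) u = min (a * u) m"
proof -
  have a: "a > 0" using assms by simp
  have "{v. u \<le> FA a m v} = {min (a * u) m..}"
  proof (intro set_eqI iffI)
    fix v assume "v \<in> {v. u \<le> FA a m v}"
    then have v: "u \<le> FA a m v" by simp
    show "v \<in> {min (a * u) m..}"
    proof (cases "v < 0")
      case True then show ?thesis using v assms by (simp add: FA_def)
    next
      case False
      show ?thesis
      proof (cases "v < m")
        case True
        then have "u \<le> v / a" using v False by (simp add: FA_def)
        then have "a * u \<le> v" using a by (simp add: field_simps)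
        then show ?thesis by simp
      next
        case False then show ?thesis by simp
      qed
    qed
  next
    fix v assume "v \<in> {min (a * u) m..}"
    then have v: "min (a * u) m \<le> v" by simp
    show "v \<in> {v. u \<le> FA a m v}"
    proof (cases "v < m")
      case True
      then have "a * u \<le> v" using v by linarith
      moreover have "0 < a * u" using a assms by simp
      ultimately have "u \<le> v / a" "\<not> v < 0" using a by (simp_all add: field_simps)
      then show ?thesis using True by (simp add: FA_def)
    next
      case False then show ?thesis using assms by (simp add: FA_def)
    qed
  qed
  then show ?thesis unfolding quantile_def by simp
qed

lemma regular_FB:
  assumes "0 \<le> a" "a < 1"
  shows "regular (interval_measure (FB a))"
proof -
  have cdf: "cdf (interval_measure (FB a)) = FB a"
    by (rule cdf_interval_measure) (use FB_mono[OF assms] FB_rc[OF assms(2)] FB_bot in auto)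
  have rd: "real_distribution (interval_measure (FB a))"
    by (rule real_distribution_interval_measure) (use FB_mono[OF assms] FB_rc[OF assms(2)] FB_bot FB_top in auto)
  have "concave_on {0<..<1} (\<lambda>q. 1 * q - (1 - a) * q^2)"
    by (rule concave_quad) (use assms in auto)
  then have "concave_on {0<..<1} (revenue_curve (FB a))"
  proof (rule concave_cong)
    fix q :: real assume "q \<in> {0<..<1}"
    then have Q: "quantile (FB a) (1 - q) = a + (1 - a) * (1 - q)"
      by (intro quantile_FB assms) auto
    show "revenue_curve (FB a) q = 1 * q - (1 - a) * q^2"
      unfolding revenue_curve_def Q by (simp add: power2_eq_square algebra_simps)
  qed
  then show ?thesis unfolding regular_def cdf using rd by simp
qed

lemma regular_FA:
  assumes "0 < m" "m < a"
  shows "regular (interval_measure (FA a m))"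
proof -
  have cdf: "cdf (interval_measure (FA a m)) = FA a m"
    by (rule cdf_interval_measure) (use FA_mono[OF assms] FA_rc[of a] assms FA_bot in auto)
  have rd: "real_distribution (interval_measure (FA a m))"
    by (rule real_distribution_interval_measure) (use FA_mono[OF assms] FA_rc[of a] assms FA_bot FA_top in auto)
  have "concave_on {0<..<1} (\<lambda>q. min (a * q - a * q^2) (m * q - 0 * q^2))"
    by (intro concave_min concave_quad) (use assms in auto)
  then have "concave_on {0<..<1} (revenue_curve (FA a m))"
  proof (rule concave_cong)
    fix q :: real assume q: "q \<in> {0<..<1}"
    have "revenue_curve (FA a m) q = q * min (a * (1 - q)) m"
      unfolding revenue_curve_def using quantile_FA[OF assms, of "1 - q"] q by simp
    also have "\<dots> = min (q * (a * (1 - q))) (q * m)"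
      using q by (simp add: min_def)
    finally show "revenue_curve (FA a m) q = min (a * q - a * q^2) (m * q - 0 * q^2)"
      by (simp add: power2_eq_square algebra_simps)
  qed
  then show ?thesis unfolding regular_def cdf using rd by simp
qed



definition Fmix :: "real \<Rightarrow> real \<Rightarrow> real \<Rightarrow> real" where
  "Fmix a m x = a * FA a m x + (1 - a) * FB a x"

lemma FB0: "FB 0 x = max 0 (min 1 x)"
  unfolding FB_def by auto

lemma Fmix_eq:
  assumes "0 < m" "m < a" "a < 1"
  shows "Fmix a m x = (if m \<le> x \<and> x < a then a else FB 0 x)"
  using assms unfolding Fmix_def FA_def FB_def by (auto simp: field_simps)

lemma Fmix_props:
  assumes "0 < m" "m < a" "a < 1"
  shows "\<And>x y. x \<le> y \<Longrightarrow> Fmix a m x \<le> Fmix a m y"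
    and "\<And>x. continuous (at_right x) (Fmix a m)"
    and "(Fmix a m \<longlongrightarrow> 0) at_bot" and "(Fmix a m \<longlongrightarrow> 1) at_top"
proof -
  fix x y :: real assume "x \<le> y"
  then have "FA a m x \<le> FA a m y" "FB a x \<le> FB a y"
    using FA_mono FB_mono assms by auto
  then show "Fmix a m x \<le> Fmix a m y"
    unfolding Fmix_def using assms by (intro add_mono mult_left_mono) auto
next
  fix x
  have "Fmix a m = (\<lambda>y. a * FA a m y + (1 - a) * FB a y)" by (simp add: Fmix_def fun_eq_iff)
  then show "continuous (at_right x) (Fmix a m)"
    using FA_rc[of a x m] FB_rc[of a x] assms by (simp only:) (intro continuous_intros, auto)
next
  have "((\<lambda>y. a * FA a m y + (1 - a) * FB a y) \<longlongrightarrow> a * 0 + (1 - a) * 0) at_bot"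
    by (intro tendsto_intros FA_bot FB_bot)
  then show "(Fmix a m \<longlongrightarrow> 0) at_bot" by (simp add: Fmix_def[abs_def])
next
  have "((\<lambda>y. a * FA a m y + (1 - a) * FB a y) \<longlongrightarrow> a * 1 + (1 - a) * 1) at_top"
    by (intro tendsto_intros FA_top FB_top)
  then show "(Fmix a m \<longlongrightarrow> 1) at_top" by (simp add: Fmix_def[abs_def])
qed

lemma FB0_props:
  shows "\<And>x y. x \<le> y \<Longrightarrow> FB 0 x \<le> FB 0 y"
    and "\<And>x. continuous (at_right x) (FB 0)"
    and "(FB 0 \<longlongrightarrow> 0) at_bot" and "(FB 0 \<longlongrightarrow> 1) at_top"
  using FB_mono[of 0] FB_rc[of 0] FB_bot FB_top by auto

definition UD :: "real measure" where "UD = interval_measure (FB 0)"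
definition DM :: "real \<Rightarrow> real \<Rightarrow> real measure" where "DM a m = interval_measure (Fmix a m)"

lemma UD: "real_distribution UD" "cdf UD = FB 0"
  unfolding UD_def
  by (rule real_distribution_interval_measure cdf_interval_measure; use FB0_props in auto)+

lemma DM: assumes "0 < m" "m < a" "a < 1"
  shows "real_distribution (DM a m)" "cdf (DM a m) = Fmix a m"
  unfolding DM_def
  by (rule real_distribution_interval_measure cdf_interval_measure; use Fmix_props[OF assms] in auto)+

lemma leftlim:
  assumes "real_distribution M" "(cdf M \<longlongrightarrow> L) (at_left p)"
  shows "measure M {..<p} = L"
proof -
  interpret real_distribution M by fact
  show ?thesis using tendsto_unique[OF trivial_limit_at_left_real cdf_at_left assms(2)] .
qed

lemma resp_prob_eq:
  assumes "real_distribution M"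
  shows "resp_prob M p b = (if b then 1 - measure M {..<p} else measure M {..<p})"
proof -
  interpret real_distribution M by fact
  have "measure M {p..} = 1 - measure M {..<p}"
    using prob_compl[of "{..<p}"] by (simp add: Compl_eq_Diff_UNIV[symmetric] Compl_lessThan)
  then show ?thesis unfolding resp_prob_def by simp
qed

lemma measure01:
  assumes "real_distribution M" "cdf M = F" "\<And>x. x < 0 \<Longrightarrow> F x = 0" "F 1 = 1"
  shows "measure M {0..1} = 1"
proof -
  interpret real_distribution M by fact
  have "eventually (\<lambda>x. cdf M x = 0) (at_left 0)"
    unfolding eventually_at_left_field using assms(2,3) by (intro exI[of _ "-1"]) auto
  then have "(cdf M \<longlongrightarrow> 0) (at_left 0)" by (rule tendsto_eventually)
  then have z: "measure M {..<0} = 0" by (rule leftlim[OF assms(1)])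
  have e: "{0..1} = {..1} - {..<(0::real)}" by auto
  have "measure M {0..1} = measure M {..1} - measure M {..<0}"
    unfolding e by (rule finite_measure_Diff) auto
  also have "\<dots> = 1"
  proof -
    have "measure M {..1} = cdf M 1" by (simp add: cdf_def)
    then show ?thesis using z assms(2,4) by simp
  qed
  finally show ?thesis .
qed

lemma UD_class: "mix2_regular_class UD"
proof -
  have r: "regular UD" unfolding UD_def by (rule regular_FB) auto
  have m: "measure UD {0..1} = 1" by (rule measure01[OF UD]) (auto simp: FB_def)
  have "0 \<le> (1::real) \<and> (1::real) \<le> 1 \<and> regular UD \<and> regular UD \<and> (\<forall>x. cdf UD x = 1 * cdf UD x + (1 - 1) * cdf UD x)"
    using r by simp
  then show ?thesis unfolding mix2_regular_class_def using UD(1) m by blast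
qed

lemma DM_class:
  assumes "0 < m" "m < a" "a < 1"
  shows "mix2_regular_class (DM a m)"
proof -
  have m: "measure (DM a m) {0..1} = 1"
    by (rule measure01[OF DM(1)[OF assms] DM(2)[OF assms]]) (use assms in \<open>auto simp: Fmix_def FA_def FB_def\<close>)
  have rA: "regular (interval_measure (FA a m))" by (rule regular_FA) (use assms in auto)
  have rB: "regular (interval_measure (FB a))" by (rule regular_FB) (use assms in auto)
  have "cdf (interval_measure (FA a m)) = FA a m"
    by (rule cdf_interval_measure) (use FA_mono FA_rc FA_bot assms in auto)
  moreover have "cdf (interval_measure (FB a)) = FB a"
    by (rule cdf_interval_measure) (use FB_mono FB_rc FB_bot assms in auto)
  ultimately have c: "\<forall>x. cdf (DM a m) x = a * cdf (interval_measure (FA a m)) x + (1 - a) * cdf (interval_measure (FB a)) x"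
    using DM(2)[OF assms] by (simp add: Fmix_def)
  have "0 \<le> a \<and> a \<le> 1 \<and> regular (interval_measure (FA a m)) \<and> regular (interval_measure (FB a)) \<and>
     (\<forall>x. cdf (DM a m) x = a * cdf (interval_measure (FA a m)) x + (1 - a) * cdf (interval_measure (FB a)) x)"
    using assms rA rB c by simp
  then show ?thesis unfolding mix2_regular_class_def using DM(1)[OF assms] m by blast
qed

lemma FB0_left: "(FB 0 \<longlongrightarrow> FB 0 p) (at_left p)"
proof -
  have "continuous (at_left p) (\<lambda>x. max 0 (min 1 x) :: real)"
    by (rule continuous_at_imp_continuous_at_within) (intro continuous_intros)
  then show ?thesis unfolding continuous_within FB0[abs_def] by simp
qed

lemma UD_left: "measure UD {..<p} = FB 0 p"
  by (rule leftlim[OF UD(1)]) (simp add: UD(2) FB0_left)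

lemma DM_left:
  assumes "0 < m" "m < a" "a < 1"
  shows "measure (DM a m) {..<p} = (if m < p \<and> p \<le> a then a else FB 0 p)"
proof (rule leftlim[OF DM(1)[OF assms]])
  have U: "(FB 0 \<longlongrightarrow> FB 0 p) (at_left p)"
    by (rule FB0_left)
  show "(cdf (DM a m) \<longlongrightarrow> (if m < p \<and> p \<le> a then a else FB 0 p)) (at_left p)"
  proof (cases "m < p \<and> p \<le> a")
    case True
    have "eventually (\<lambda>x. Fmix a m x = a) (at_left p)"
      unfolding eventually_at_left_field using True assms
      by (intro exI[of _ m]) (auto simp: Fmix_eq)
    then show ?thesis using True unfolding DM(2)[OF assms] by (simp add: tendsto_eventually)
  next
    case False
    have "eventually (\<lambda>x. FB 0 x = Fmix a m x) (at_left p)"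
    proof (cases "p \<le> m")
      case True then show ?thesis
        unfolding eventually_at_left_field using assms by (intro exI[of _ "p - 1"]) (auto simp: Fmix_eq)
    next
      case c: False
      then have "a < p" using False by auto
      then show ?thesis
        unfolding eventually_at_left_field using assms by (intro exI[of _ a]) (auto simp: Fmix_eq)
    qed
    then have "(Fmix a m \<longlongrightarrow> FB 0 p) (at_left p)" using U by (rule Lim_transform_eventually[rotated])
    moreover have "(if m < p \<and> p \<le> a then a else FB 0 p) = FB 0 p" using False by auto
    ultimately show ?thesis unfolding DM(2)[OF assms] by simp
  qed
qed



lemma levy_obtain:
  assumes "levy_dist F G \<le> ereal \<epsilon>" "\<eta> > 0"
  shows "\<exists>e. e < \<epsilon> + \<eta> \<and> (\<forall>v. F (v - e) - e \<le> G v \<and> G v \<le> F (v + e) + e)"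
proof -
  have "levy_dist F G < ereal (\<epsilon> + \<eta>)" using assms by (simp add: le_less_trans)
  then obtain x where x: "x \<in> {ereal e | e. \<forall>v. F (v - e) - e \<le> G v \<and> G v \<le> F (v + e) + e}" "x < ereal (\<epsilon> + \<eta>)"
    unfolding levy_dist_def Inf_less_iff by blast
  then show ?thesis by auto
qed

lemma levy_disjoint:
  assumes "0 < \<epsilon>" "0 < m" "m < a" "a < 1" "a - m = 5 * \<epsilon>"
  shows "\<not> (levy_dist (FB 0) G \<le> ereal \<epsilon> \<and> levy_dist (Fmix a m) G \<le> ereal \<epsilon>)"
proof
  assume "levy_dist (FB 0) G \<le> ereal \<epsilon> \<and> levy_dist (Fmix a m) G \<le> ereal \<epsilon>"
  then obtain e1 e2 where e1: "e1 < \<epsilon> + \<epsilon>/8" "\<And>v. G v \<le> FB 0 (v + e1) + e1"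
    and e2: "e2 < \<epsilon> + \<epsilon>/8" "\<And>v. Fmix a m (v - e2) - e2 \<le> G v"
    using levy_obtain[of "FB 0" G \<epsilon> "\<epsilon>/8"] levy_obtain[of "Fmix a m" G \<epsilon> "\<epsilon>/8"] assms(1)
    by auto
  have "Fmix a m m = a" using assms by (simp add: Fmix_eq)
  then have "a - e2 \<le> G (m + e2)" using e2(2)[of "m + e2"] by simp
  also have "\<dots> \<le> FB 0 (m + e2 + e1) + e1" by (rule e1(2))
  also have "FB 0 (m + e2 + e1) \<le> max 0 (m + e2 + e1)" unfolding FB0 by auto
  finally have "a \<le> max 0 (m + e2 + e1) + e1 + e2" by simp
  then show False using assms e1(1) e2(1) by (auto simp: max_def split: if_splits)
qed


lemma respU: "resp_prob UD p b = (if b then 1 - FB 0 p else FB 0 p)"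
  using resp_prob_eq[OF UD(1)] UD_left by simp

lemma respD: assumes "0 < m" "m < a" "a < 1"
  shows "resp_prob (DM a m) p b = (if b then 1 - (if m < p \<and> p \<le> a then a else FB 0 p) else (if m < p \<and> p \<le> a then a else FB 0 p))"
  using resp_prob_eq[OF DM(1)[OF assms]] DM_left[OF assms] by simp

lemma FB0_01: "0 \<le> FB 0 p" "FB 0 p \<le> 1" unfolding FB0 by auto

lemma klstep_same: assumes "\<And>b. r0 p b = r1 p b" shows "klstep r0 r1 p = 0"
  unfolding klstep_def assms by (cases "r1 p True = 0"; cases "r1 p False = 0") auto

lemma kl_inside:
  assumes "1/4 \<le> m" "m < p" "p \<le> a" "a \<le> 3/4" "a - m = d"
  shows "klstep (resp_prob UD) (resp_prob (DM a m)) p \<le> 8 * d^2"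
proof -
  have mma: "0 < m" "m < a" "a < 1" using assms by auto
  have Fp: "FB 0 p = p" using assms unfolding FB0 by auto
  have r0: "resp_prob UD p b = (if b then 1 - p else p)" for b using respU Fp by simp
  have r1: "resp_prob (DM a m) p b = (if b then 1 - a else a)" for b using respD[OF mma] assms by simp
  have "klstep (resp_prob UD) (resp_prob (DM a m)) p \<le> (p - a)^2 / (1 - a) + (a - p)^2 / a"
    using klstep_bound[of "resp_prob UD" p "resp_prob (DM a m)"] assms
    unfolding r0 r1 by (simp add: power2_commute)
  also have "\<dots> \<le> d^2 / (1/4) + d^2 / (1/4)"
  proof (rule add_mono)
    have sq: "(p - a)^2 \<le> d^2" "(a - p)^2 \<le> d^2" using assms
      by (simp_all add: abs_le_square_iff[symmetric] abs_if)
    show "(p - a)^2 / (1 - a) \<le> d^2 / (1/4)"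
      by (rule frac_le) (use sq assms in auto)
    show "(a - p)^2 / a \<le> d^2 / (1/4)"
      by (rule frac_le) (use sq assms in auto)
  qed
  finally show ?thesis by simp
qed


lemma det_success_Ptree:
  "det_success D n \<epsilon> price est = (\<Sum>h\<in>HL n. Ptree (resp_prob D) price n h * (if levy_dist (cdf D) (est h) \<le> ereal \<epsilon> then 1 else 0))"
  unfolding det_success_def Ptree_def by simp

lemma det_bound:
  fixes \<epsilon> :: real and k n :: nat
  assumes eps: "0 < \<epsilon>" "5 * \<epsilon> \<le> 1/8" and kd: "real k * (5 * \<epsilon>) \<le> 1/2"
  defines "aj \<equiv> \<lambda>j::nat. 1/4 + (real j + 1) * (5 * \<epsilon>)"
  defines "mj \<equiv> \<lambda>j::nat. 1/4 + real j * (5 * \<epsilon>)"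
  shows "real k * det_success UD n \<epsilon> price est + (\<Sum>j<k. det_success (DM (aj j) (mj j)) n \<epsilon> price est)
     \<le> real k + 2 * sqrt (real k * (real n * (8 * (5 * \<epsilon>)^2)))"
proof -
  define d where "d = 5 * \<epsilon>"
  have d: "0 < d" "d \<le> 1/8" "real k * d \<le> 1/2" using eps kd by (auto simp: d_def)
  have ad: "aj j - mj j = d" for j by (simp add: aj_def mj_def d_def algebra_simps)
  have rng: "1/4 \<le> mj j" "aj j \<le> 3/4" if "j < k" for j
  proof -
    show "1/4 \<le> mj j" using d by (simp add: mj_def d_def[symmetric])
    have "real (Suc j) \<le> real k" using that by simp
    then have "(real j + 1) * d \<le> real k * d" using d by (intro mult_right_mono) auto
    then have "(real j + 1) * d \<le> 1/2" using d by linarith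
    then show "aj j \<le> 3/4" by (simp add: aj_def d_def algebra_simps)
  qed
  have mma: "0 < mj j" "mj j < aj j" "aj j < 1" if "j < k" for j
    using rng[OF that] ad[of j] d by auto
  define c where "c j p = (if mj j < p \<and> p \<le> aj j then 8 * d^2 else 0)" for j p
  let ?qU = "resp_prob UD" and ?r = "\<lambda>j. resp_prob (DM (aj j) (mj j))"
  have "real k * (\<Sum>h\<in>HL n. Ptree ?qU price n h * (if levy_dist (FB 0) (est h) \<le> ereal \<epsilon> then 1 else 0))
       + (\<Sum>j<k. \<Sum>h\<in>HL n. Ptree (?r j) price n h * (if levy_dist (Fmix (aj j) (mj j)) (est h) \<le> ereal \<epsilon> then 1 else 0))
      \<le> real k + 2 * sqrt (real k * (real n * (8 * d^2)))"
  proof (rule multi_bound[where c = c])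
    show "\<And>p b. 0 \<le> ?qU p b" using FB0_01 by (simp add: respU)
    show "\<And>p. ?qU p True + ?qU p False = 1" by (simp add: respU)
    show "\<And>j p b. j < k \<Longrightarrow> 0 \<le> ?r j p b" using FB0_01 mma by (simp add: respD) (smt (verit))
    show "\<And>j p. j < k \<Longrightarrow> ?r j p True + ?r j p False = 1" using mma by (simp add: respD)
    show "\<And>j p b. j < k \<Longrightarrow> 0 < ?qU p b \<Longrightarrow> 0 < ?r j p b"
      using mma by (auto simp: respD respU) (meson less_trans)
    show "\<And>j h. j < k \<Longrightarrow> \<not> (levy_dist (FB 0) (est h) \<le> ereal \<epsilon> \<and> levy_dist (Fmix (aj j) (mj j)) (est h) \<le> ereal \<epsilon>)"
      using mma ad eps by (intro levy_disjoint) (auto simp: d_def)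
    show "klstep ?qU (?r j) p \<le> c j p" if "j < k" for j p
    proof (cases "mj j < p \<and> p \<le> aj j")
      case True
      then show ?thesis using kl_inside[of "mj j" p "aj j" d] rng[OF that] ad[of j] by (simp add: c_def)
    next
      case False
      have "klstep ?qU (?r j) p = 0"
        by (rule klstep_same) (use False mma[OF that] in \<open>auto simp add: respD respU\<close>)
      then show ?thesis using False by (simp add: c_def)
    qed
    show "(\<Sum>j<k. c j p) \<le> 8 * d^2" for p
    proof -
      let ?A = "{j\<in>{..<k}. mj j < p \<and> p \<le> aj j}"
      have "(\<Sum>j<k. c j p) = (\<Sum>j\<in>?A. 8 * d^2)"
        unfolding c_def by (rule sum.inter_filter[symmetric]) simp
      also have "\<dots> = 8 * d^2 * real (card ?A)" by simp
      also have "card ?A \<le> Suc 0"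
      proof (subst card_le_Suc0_iff_eq, simp, intro ballI)
        fix x y assume x: "x \<in> ?A" and y: "y \<in> ?A"
        show "x = y"
        proof (rule ccontr)
          assume "x \<noteq> y"
          then consider "x < y" | "y < x" by linarith
          then show False
          proof cases
            case 1
            then have "real x + 1 \<le> real y" by simp
            then have "(real x + 1) * d \<le> real y * d" using d by (intro mult_right_mono) auto
            then show False using x y by (simp add: aj_def mj_def d_def[symmetric])
          next
            case 2
            then have "real y + 1 \<le> real x" by simp
            then have "(real y + 1) * d \<le> real x * d" using d by (intro mult_right_mono) auto
            then show False using x y by (simp add: aj_def mj_def d_def[symmetric])
          qed
        qed
      qed
      then have "8 * d^2 * real (card ?A) \<le> 8 * d^2 * 1" by (intro mult_left_mono) auto
      finally show ?thesis by simp
    qed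
  qed
  moreover have "det_success UD n \<epsilon> price est = (\<Sum>h\<in>HL n. Ptree ?qU price n h * (if levy_dist (FB 0) (est h) \<le> ereal \<epsilon> then 1 else 0))"
    unfolding det_success_Ptree UD(2) ..
  moreover have "(\<Sum>j<k. det_success (DM (aj j) (mj j)) n \<epsilon> price est) =
     (\<Sum>j<k. \<Sum>h\<in>HL n. Ptree (?r j) price n h * (if levy_dist (Fmix (aj j) (mj j)) (est h) \<le> ereal \<epsilon> then 1 else 0))"
    by (rule sum.cong[OF refl]) (simp add: det_success_Ptree DM(2)[OF mma])
  ultimately show ?thesis by (simp add: d_def)
qed


theorem theorem4:
  shows "\<exists>c>0. \<exists>\<epsilon>0>0. \<forall>\<epsilon>. 0 < \<epsilon> \<and> \<epsilon> < \<epsilon>0 \<longrightarrow>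
    (\<forall>(M::real measure) (n::nat) price est.
       prob_space M \<and> (\<forall>D. mix2_regular_class D \<longrightarrow> success_prob M D n \<epsilon> price est \<ge> 2/3)
       \<longrightarrow> real n \<ge> c / \<epsilon> ^ 3)"
proof (rule exI[of _ "1/144000"], intro conjI, simp, rule exI[of _ "1/40"], intro conjI, simp, intro allI impI)
  fix \<epsilon> :: real and M :: "real measure" and n :: nat and price est
  assume eps: "0 < \<epsilon> \<and> \<epsilon> < 1/40"
  assume H: "prob_space M \<and> (\<forall>D. mix2_regular_class D \<longrightarrow> success_prob M D n \<epsilon> price est \<ge> 2/3)"
  then interpret prob_space M by simp
  have e0: "0 < \<epsilon>" and e1: "\<epsilon> < 1/40" using eps by auto
  define x where "x = 1 / (10 * \<epsilon>)"
  have x4: "x > 4" unfolding x_def using e0 e1 by (simp add: field_simps)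
  define k where "k = nat \<lfloor>x\<rfloor>"
  have kx: "real k \<le> x" unfolding k_def using x4 by linarith
  have kx2: "real k \<ge> x / 2" unfolding k_def using x4 by linarith
  have kd: "real k * (5 * \<epsilon>) \<le> 1/2"
  proof -
    have "real k * (5 * \<epsilon>) \<le> x * (5 * \<epsilon>)" using kx e0 by (intro mult_right_mono) auto
    also have "\<dots> = 1/2" unfolding x_def using e0 by (simp add: field_simps)
    finally show ?thesis .
  qed
  define aj where "aj = (\<lambda>j::nat. 1/4 + (real j + 1) * (5 * \<epsilon>))"
  define mj where "mj = (\<lambda>j::nat. 1/4 + real j * (5 * \<epsilon>))"
  have mma: "0 < mj j" "mj j < aj j" "aj j < 1" if "j < k" for j
  proof -
    have "(real j + 1) * (5 * \<epsilon>) \<le> real k * (5 * \<epsilon>)" using that e0 by (intro mult_right_mono) auto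
    then have h1: "(real j + 1) * (5 * \<epsilon>) \<le> 1/2" using kd by linarith
    have h2: "0 \<le> real j * (5 * \<epsilon>)" using e0 by simp
    show "0 < mj j" unfolding mj_def using h2 by linarith
    show "mj j < aj j" unfolding aj_def mj_def using e0 by (simp add: algebra_simps)
    show "aj j < 1" unfolding aj_def using h1 by linarith
  qed
  let ?gU = "\<lambda>\<omega>. det_success UD n \<epsilon> (price \<omega>) (est \<omega>)"
  let ?f = "\<lambda>j \<omega>. det_success (DM (aj j) (mj j)) n \<epsilon> (price \<omega>) (est \<omega>)"
  have S0: "integral\<^sup>L M ?gU \<ge> 2/3"
    using H UD_class unfolding success_prob_def by blast
  have Sj: "integral\<^sup>L M (?f j) \<ge> 2/3" if "j < k" for j
    using H DM_class[OF mma[OF that]] unfolding success_prob_def by blast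
  have I0: "integrable M ?gU" using S0 not_integrable_integral_eq by force
  have Ij: "integrable M (?f j)" if "j < k" for j using Sj[OF that] not_integrable_integral_eq by force
  define B where "B = real k + 2 * sqrt (real k * (real n * (8 * (5 * \<epsilon>)^2)))"
  have int: "integrable M (\<lambda>\<omega>. real k * ?gU \<omega> + (\<Sum>j<k. ?f j \<omega>))"
    using I0 Ij by (auto intro!: Bochner_Integration.integrable_add Bochner_Integration.integrable_mult_right Bochner_Integration.integrable_sum)
  have "real k * (2/3) + real k * (2/3) \<le> real k * integral\<^sup>L M ?gU + (\<Sum>j<k. integral\<^sup>L M (?f j))"
  proof (rule add_mono)
    show "real k * (2/3) \<le> real k * integral\<^sup>L M ?gU" using S0 by (intro mult_left_mono) auto
    have "(\<Sum>j<k. (2/3::real)) \<le> (\<Sum>j<k. integral\<^sup>L M (?f j))" by (rule sum_mono) (use Sj in auto)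
    then show "real k * (2/3) \<le> (\<Sum>j<k. integral\<^sup>L M (?f j))" by simp
  qed
  also have "\<dots> = (\<integral>\<omega>. real k * ?gU \<omega> + (\<Sum>j<k. ?f j \<omega>) \<partial>M)"
  proof -
    have iS: "integrable M (\<lambda>\<omega>. \<Sum>j<k. ?f j \<omega>)"
      using Ij by (auto intro!: Bochner_Integration.integrable_sum)
    have "(\<integral>\<omega>. real k * ?gU \<omega> + (\<Sum>j<k. ?f j \<omega>) \<partial>M) = (\<integral>\<omega>. real k * ?gU \<omega> \<partial>M) + (\<integral>\<omega>. (\<Sum>j<k. ?f j \<omega>) \<partial>M)"
      by (rule Bochner_Integration.integral_add) (use I0 iS in auto)
    also have "(\<integral>\<omega>. real k * ?gU \<omega> \<partial>M) = real k * integral\<^sup>L M ?gU"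
      by (rule integral_mult_right_zero)
    also have "(\<integral>\<omega>. (\<Sum>j<k. ?f j \<omega>) \<partial>M) = (\<Sum>j<k. integral\<^sup>L M (?f j))"
      by (rule Bochner_Integration.integral_sum) (use Ij in auto)
    finally show ?thesis by simp
  qed
  also have "\<dots> \<le> B"
  proof (rule integral_le_const[OF int], rule AE_I2)
    fix \<omega>
    show "real k * ?gU \<omega> + (\<Sum>j<k. ?f j \<omega>) \<le> B"
      unfolding B_def aj_def mj_def by (rule det_bound) (use e0 e1 kd in auto)
  qed
  finally have "real k / 3 \<le> 2 * sqrt (real k * (real n * (8 * (5 * \<epsilon>)^2)))"
    unfolding B_def by simp
  then have "(real k / 3)^2 \<le> (2 * sqrt (real k * (real n * (8 * (5 * \<epsilon>)^2))))^2"
    using e0 by (intro power_mono) auto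
  then have "(real k)^2 / 9 \<le> 4 * (real k * (real n * (200 * \<epsilon>^2)))"
    by (simp add: power_mult_distrib power_divide)
  then have "real k * real k \<le> real k * (7200 * \<epsilon>^2 * real n)"
    by (simp add: power2_eq_square algebra_simps)
  moreover have kpos: "real k > 0" using kx2 x4 by linarith
  ultimately have "real k \<le> 7200 * \<epsilon>^2 * real n" by simp
  then have A: "20 * \<epsilon> * real k \<le> 20 * \<epsilon> * (7200 * \<epsilon>^2 * real n)"
    using e0 by (intro mult_left_mono) auto
  have "1 \<le> 20 * \<epsilon> * real k"
    using kx2 unfolding x_def using e0 by (simp add: field_simps)
  also note A
  also have "20 * \<epsilon> * (7200 * \<epsilon>^2 * real n) = 144000 * \<epsilon>^3 * real n"
    by (simp add: power3_eq_cube power2_eq_square)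
  finally have "1 \<le> 144000 * \<epsilon>^3 * real n" .
  then show "1 / 144000 / \<epsilon> ^ 3 \<le> real n"
    using e0 by (simp add: field_simps)
qed


end
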